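(* For integers $n\ge0$ and $k\ge1$, $(-1)^{k+1}D_{-2n-2k}^{(2k-1)}$ equals the number of integer sequences $a_1\le a_2\ge a_3\le a_4\ge\cdots\le a_{2n}$ with $1\le a_i\le k$ for all $i$ (for $n=0$ this number is $1$, counting the empty sequence).
   Context: For $N\ge0$ and $0\le r,s\le K$, $C_N^{(K)}(r\to s)$ is the number of lattice paths with steps $(1,1),(1,-1)$ from $(0,r)$ to $(N,s)$ never below the $x$-axis nor above $y=K$. For odd $K$, $F(x)=\sum_{N\ge0}C_N^{(K)}(r\to s)x^N$ is rational $p/q$ with $\deg p<\deg q$, $q(0)\ne0$, and $C_N^{(K)}(r\to s)$ for negative $N$ is defined by $\sum_{N\ge1}C_{-N}^{(K)}(r\to s)x^N=-F(1/x)$ (equivalently by extending the linear recurrence backwards). For all integers $n$, $D_{2n}^{(K)}:=C_{2n+K}^{(K)}(0\to K)$. *)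

theory Defs
  imports "HOL-Computational_Algebra.Computational_Algebra"
begin

text \<open>Lattice paths with steps (1,1),(1,-1) from (0,r) to (N,s), staying in the strip
  0 \<le> y \<le> K, encoded by their list of heights y_0,...,y_N.\<close>
definition strip_paths :: "nat \<Rightarrow> nat \<Rightarrow> nat \<Rightarrow> nat \<Rightarrow> nat list set" where
  "strip_paths K r s N = {ys. length ys = Suc N \<and> ys ! 0 = r \<and> ys ! N = s \<and>
      (\<forall>y\<in>set ys. y \<le> K) \<and>
      (\<forall>i<N. ys ! Suc i = ys ! i + 1 \<or> ys ! i = ys ! Suc i + 1)}"

definition C_nat :: "nat \<Rightarrow> nat \<Rightarrow> nat \<Rightarrow> nat \<Rightarrow> nat" where
  "C_nat K r s N = card (strip_paths K r s N)"

definition C_gf :: "nat \<Rightarrow> nat \<Rightarrow> nat \<Rightarrow> real fps" where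
  "C_gf K r s = Abs_fps (\<lambda>N. real (C_nat K r s N))"

definition C_pq :: "nat \<Rightarrow> nat \<Rightarrow> nat \<Rightarrow> real poly \<times> real poly" where
  "C_pq K r s = (SOME (p, q). degree p < degree q \<and> coeff q 0 \<noteq> 0 \<and>
       fps_of_poly p / fps_of_poly q = C_gf K r s)"

text \<open>-F(1/x), expanded as a power series in x: with F = p/q,
  F(1/x) = x^(deg q - deg p) * reflect p (x) / reflect q (x).\<close>
definition C_neg_gf :: "nat \<Rightarrow> nat \<Rightarrow> nat \<Rightarrow> real fps" where
  "C_neg_gf K r s = (case C_pq K r s of (p, q) \<Rightarrow>
      - (fps_X ^ (degree q - degree p) * fps_of_poly (reflect_poly p)
          / fps_of_poly (reflect_poly q)))"

definition C_int :: "nat \<Rightarrow> nat \<Rightarrow> nat \<Rightarrow> int \<Rightarrow> real" where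
  "C_int K r s N = (if 0 \<le> N then real (C_nat K r s (nat N))
                    else fps_nth (C_neg_gf K r s) (nat (- N)))"

definition D :: "nat \<Rightarrow> int \<Rightarrow> real" where
  "D K m = C_int K 0 K (m + int K)"

text \<open>Sequences a_1 \<le> a_2 \<ge> a_3 \<le> ... of length 2n with entries in {1..k} (0-indexed list).\<close>
definition alt_seqs :: "nat \<Rightarrow> nat \<Rightarrow> nat list set" where
  "alt_seqs n k = {a. length a = 2 * n \<and> (\<forall>x\<in>set a. 1 \<le> x \<and> x \<le> k) \<and>
      (\<forall>j. Suc j < 2 * n \<longrightarrow>
          (if even j then a ! j \<le> a ! Suc j else a ! j \<ge> a ! Suc j))}"

end

theory Submission imports Defs begin

lemma strip_paths_finite: "finite (strip_paths K r s N)"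
proof -
  have "strip_paths K r s N \<subseteq> {ys. set ys \<subseteq> {0..K} \<and> length ys = Suc N}"
    unfolding strip_paths_def by auto
  moreover have "finite {ys. set ys \<subseteq> {0..K} \<and> length ys = Suc N}"
    using finite_lists_length_eq[of "{0..K}" "Suc N"] by simp
  ultimately show ?thesis using finite_subset by blast
qed

lemma strip_paths_0: "strip_paths K 0 s 0 = (if s = 0 then {[0]} else {})"
  unfolding strip_paths_def
  by (auto simp: length_Suc_conv)

lemma strip_paths_Suc:
  assumes "s \<le> K"
  shows "strip_paths K 0 s (Suc N) = (\<lambda>ys. ys @ [s]) `
    ((if 0 < s then strip_paths K 0 (s - 1) N else {}) \<union> (if s < K then strip_paths K 0 (s + 1) N else {}))"
proof (intro equalityI subsetI)
  fix zs assume zs: "zs \<in> strip_paths K 0 s (Suc N)"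
  hence len: "length zs = Suc (Suc N)" and z0: "zs ! 0 = 0" and zN: "zs ! Suc N = s"
    and zK: "\<forall>y\<in>set zs. y \<le> K"
    and st: "\<forall>i<Suc N. zs ! Suc i = zs ! i + 1 \<or> zs ! i = zs ! Suc i + 1"
    unfolding strip_paths_def by auto
  define ys where "ys = take (Suc N) zs"
  have zsd: "zs = ys @ [s]"
  proof -
    have "zs = take (Suc (Suc N)) zs" using len by simp
    also have "\<dots> = take (Suc N) zs @ [zs ! Suc N]" using take_Suc_conv_app_nth[of "Suc N" zs] len by simp
    finally show ?thesis unfolding ys_def using zN by simp
  qed
  have lys: "length ys = Suc N" using len ys_def by simp
  have ysi: "\<And>i. i < Suc N \<Longrightarrow> ys ! i = zs ! i" unfolding ys_def by simp
  have ysK: "\<forall>y\<in>set ys. y \<le> K" using zK zsd by auto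
  have ys0: "ys ! 0 = 0" using ysi z0 by simp
  have yst: "\<forall>i<N. ys ! Suc i = ys ! i + 1 \<or> ys ! i = ys ! Suc i + 1" using st ysi by auto
  have last: "s = ys ! N + 1 \<or> ys ! N = s + 1" using st[rule_format, of N] ysi zN by auto
  have yNK: "ys ! N \<le> K" using ysK lys by (simp)
  show "zs \<in> (\<lambda>ys. ys @ [s]) `
    ((if 0 < s then strip_paths K 0 (s - 1) N else {}) \<union> (if s < K then strip_paths K 0 (s + 1) N else {}))"
  proof (rule image_eqI[where x=ys and f="\<lambda>ys. ys @ [s]"])
    show "zs = ys @ [s]" by (rule zsd)
    from last show "ys \<in> (if 0 < s then strip_paths K 0 (s - 1) N else {}) \<union> (if s < K then strip_paths K 0 (s + 1) N else {})"
    proof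
      assume "s = ys ! N + 1"
      thus ?thesis using lys ys0 ysK yst unfolding strip_paths_def by auto
    next
      assume "ys ! N = s + 1"
      thus ?thesis using lys ys0 ysK yst yNK unfolding strip_paths_def by auto
    qed
  qed
next
  fix zs assume "zs \<in> (\<lambda>ys. ys @ [s]) `
    ((if 0 < s then strip_paths K 0 (s - 1) N else {}) \<union> (if s < K then strip_paths K 0 (s + 1) N else {}))"
  then obtain ys s' where zs: "zs = ys @ [s]" and ys: "ys \<in> strip_paths K 0 s' N"
    and adj: "s = s' + 1 \<or> s' = s + 1" and "s' \<le> K"
  proof -
    assume H: "\<And>ys s'. zs = ys @ [s] \<Longrightarrow> ys \<in> strip_paths K 0 s' N \<Longrightarrow> s = s' + 1 \<or> s' = s + 1 \<Longrightarrow> s' \<le> K \<Longrightarrow> thesis"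
    from \<open>zs \<in> _\<close> obtain ys where zs: "zs = ys @ [s]" and
      ys: "ys \<in> (if 0 < s then strip_paths K 0 (s - 1) N else {}) \<union> (if s < K then strip_paths K 0 (s + 1) N else {})" by blast
    show thesis
    proof (cases "0 < s \<and> ys \<in> strip_paths K 0 (s - 1) N")
      case True thus thesis using H[OF zs, of "s-1"] assms by auto
    next
      case False
      hence "s < K" "ys \<in> strip_paths K 0 (s + 1) N" using ys by (auto split: if_splits)
      thus thesis using H[OF zs, of "s+1"] by auto
    qed
  qed
  hence lys: "length ys = Suc N" and y0: "ys ! 0 = 0" and yN: "ys ! N = s'"
    and yK: "\<forall>y\<in>set ys. y \<le> K"
    and st: "\<forall>i<N. ys ! Suc i = ys ! i + 1 \<or> ys ! i = ys ! Suc i + 1"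
    unfolding strip_paths_def by auto
  have "\<forall>i<Suc N. zs ! Suc i = zs ! i + 1 \<or> zs ! i = zs ! Suc i + 1"
  proof (intro allI impI)
    fix i assume "i < Suc N"
    show "zs ! Suc i = zs ! i + 1 \<or> zs ! i = zs ! Suc i + 1"
    proof (cases "i < N")
      case True thus ?thesis using st zs lys by (simp add: nth_append)
    next
      case False hence "i = N" using \<open>i < Suc N\<close> by simp
      thus ?thesis using zs lys yN adj by (auto simp: nth_append)
    qed
  qed
  thus "zs \<in> strip_paths K 0 s (Suc N)"
    unfolding strip_paths_def using zs lys y0 yK assms by (auto simp: nth_append)
qed

lemma C_nat_0: "C_nat K 0 s 0 = (if s = 0 then 1 else 0)"
  unfolding C_nat_def strip_paths_0 by simp

lemma C_nat_Suc:
  assumes "s \<le> K"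
  shows "C_nat K 0 s (Suc N) = (if 0 < s then C_nat K 0 (s - 1) N else 0) + (if s < K then C_nat K 0 (s + 1) N else 0)"
proof -
  let ?A = "(if 0 < s then strip_paths K 0 (s - 1) N else {})"
  let ?B = "(if s < K then strip_paths K 0 (s + 1) N else {})"
  have inj: "inj_on (\<lambda>ys. ys @ [s]) (?A \<union> ?B)" by (auto simp: inj_on_def)
  have disj: "?A \<inter> ?B = {}" unfolding strip_paths_def by auto
  have "C_nat K 0 s (Suc N) = card (?A \<union> ?B)"
    unfolding C_nat_def strip_paths_Suc[OF assms] using card_image[OF inj] by simp
  also have "\<dots> = card ?A + card ?B"
    using card_Un_disjoint[OF _ _ disj] strip_paths_finite by simp
  finally show ?thesis unfolding C_nat_def by simp
qed


lemma fps_X_mult_nth': "(fps_X * (f::real fps)) $ n = (if n = 0 then 0 else f $ (n - 1))"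
  using fps_X_power_mult_nth[of 1 f n] by auto

lemma F_top:
  assumes "1 \<le> K"
  shows "C_gf K 0 K = fps_X * C_gf K 0 (K - 1)"
proof (rule fps_ext)
  fix n show "C_gf K 0 K $ n = (fps_X * C_gf K 0 (K - 1)) $ n"
    using assms by (cases n) (auto simp: C_gf_def fps_X_mult_nth' C_nat_0 C_nat_Suc)
qed

lemma F_mid:
  assumes "0 < s" "s < K"
  shows "C_gf K 0 s = fps_X * C_gf K 0 (s - 1) + fps_X * C_gf K 0 (s + 1)"
proof (rule fps_ext)
  fix n show "C_gf K 0 s $ n = (fps_X * C_gf K 0 (s - 1) + fps_X * C_gf K 0 (s + 1)) $ n"
    using assms by (cases n) (auto simp: C_gf_def fps_X_mult_nth' C_nat_0 C_nat_Suc)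
qed

lemma F_bot:
  assumes "0 < K"
  shows "C_gf K 0 0 = 1 + fps_X * C_gf K 0 1"
proof (rule fps_ext)
  fix n show "C_gf K 0 0 $ n = (1 + fps_X * C_gf K 0 1) $ n"
    using assms by (cases n) (auto simp: C_gf_def fps_X_mult_nth' C_nat_0 C_nat_Suc)
qed

fun Qp :: "nat \<Rightarrow> real poly" where
  "Qp 0 = 1" | "Qp (Suc 0) = 1" | "Qp (Suc (Suc m)) = Qp (Suc m) - monom 1 2 * Qp m"

lemma fX2: "fps_of_poly (monom (1::real) 2) = fps_X ^ 2"
  by (simp add: fps_of_poly_monom')

lemma F_down:
  assumes "Suc j \<le> K"
  shows "fps_X ^ j * C_gf K 0 (K - j) = fps_of_poly (Qp j) * C_gf K 0 K \<and>
         fps_X ^ Suc j * C_gf K 0 (K - Suc j) = fps_of_poly (Qp (Suc j)) * C_gf K 0 K"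
  using assms
proof (induction j)
  case 0
  thus ?case using F_top[of K] by simp
next
  case (Suc j)
  hence IH1: "fps_X ^ j * C_gf K 0 (K - j) = fps_of_poly (Qp j) * C_gf K 0 K"
    and IH2: "fps_X ^ Suc j * C_gf K 0 (K - Suc j) = fps_of_poly (Qp (Suc j)) * C_gf K 0 K"
    by auto
  let ?s = "K - Suc j"
  have s: "0 < ?s" "?s < K" using Suc.prems by auto
  have e1: "?s - 1 = K - Suc (Suc j)" "?s + 1 = K - j" using Suc.prems by auto
  have rec: "C_gf K 0 ?s = fps_X * C_gf K 0 (K - Suc (Suc j)) + fps_X * C_gf K 0 (K - j)"
    using F_mid[OF s] e1 by simp
  have "fps_X ^ Suc (Suc j) * C_gf K 0 (K - Suc (Suc j))
      = fps_X ^ Suc j * (fps_X * C_gf K 0 (K - Suc (Suc j)))" by (simp add: mult.assoc)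
  also have "\<dots> = fps_X ^ Suc j * (C_gf K 0 ?s - fps_X * C_gf K 0 (K - j))"
    using rec by simp
  also have "\<dots> = fps_X ^ Suc j * C_gf K 0 ?s - fps_X ^ 2 * (fps_X ^ j * C_gf K 0 (K - j))"
    by (simp add: algebra_simps power2_eq_square)
  also have "\<dots> = fps_of_poly (Qp (Suc j)) * C_gf K 0 K - fps_X ^ 2 * (fps_of_poly (Qp j) * C_gf K 0 K)"
    using IH1 IH2 by simp
  also have "\<dots> = fps_of_poly (Qp (Suc (Suc j))) * C_gf K 0 K"
    by (simp add: fps_of_poly_diff fps_of_poly_mult fX2 algebra_simps)
  finally show ?case using IH2 by simp
qed

lemma F_closed:
  assumes "1 \<le> K"
  shows "fps_of_poly (Qp (Suc K)) * C_gf K 0 K = fps_X ^ K"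
proof -
  obtain m where K: "K = Suc m" using assms by (cases K) auto
  have d: "fps_X ^ m * C_gf K 0 1 = fps_of_poly (Qp m) * C_gf K 0 K"
      "fps_X ^ K * C_gf K 0 0 = fps_of_poly (Qp K) * C_gf K 0 K"
    using F_down[of m K] K by auto
  have "fps_X ^ K = fps_X ^ K * C_gf K 0 0 - fps_X ^ 2 * (fps_X ^ m * C_gf K 0 1)"
    using F_bot[of K] K by (simp add: algebra_simps power2_eq_square)
  also have "\<dots> = fps_of_poly (Qp (Suc K)) * C_gf K 0 K"
    using d K by (simp add: fps_of_poly_diff fps_of_poly_mult fX2 algebra_simps)
  finally show ?thesis by simp
qed


lemma Qp_props: "degree (Qp m) \<le> m \<and> coeff (Qp m) m = (if even m then (-1)^(m div 2) else 0) \<and> coeff (Qp m) 0 = 1"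
proof (induction m rule: Qp.induct)
  case 1 thus ?case by simp
next
  case 2 thus ?case by simp
next
  case (3 m)
  have d1: "degree (monom (1::real) 2 * Qp m) \<le> Suc (Suc m)"
    using degree_mult_le[of "monom (1::real) 2" "Qp m"] 3 by (simp add: degree_monom_eq)
  have dg: "degree (Qp (Suc (Suc m))) \<le> Suc (Suc m)"
    using degree_diff_le[of "Qp (Suc m)" "Suc (Suc m)" "monom 1 2 * Qp m"] 3 d1 by auto
  have c1: "coeff (Qp (Suc m)) (Suc (Suc m)) = 0" using 3 by (intro coeff_eq_0) auto
  have c2: "coeff (monom (1::real) 2 * Qp m) (Suc (Suc m)) = coeff (Qp m) m"
    using coeff_monom_mult[of "1::real" 2 "Qp m" "Suc (Suc m)"] by simp
  have c3: "coeff (monom (1::real) 2 * Qp m) 0 = 0"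
    by (simp add: coeff_mult monom_0)
  show ?case using dg c1 c2 c3 3 by (auto simp: coeff_diff)
qed

lemma degree_Qp_even: "degree (Qp (2 * j)) = 2 * j"
proof -
  have "coeff (Qp (2*j)) (2*j) \<noteq> 0" using Qp_props[of "2*j"] by simp
  hence "2 * j \<le> degree (Qp (2*j))" by (rule le_degree)
  thus ?thesis using Qp_props[of "2*j"] by simp
qed

fun ep :: "nat \<Rightarrow> real poly" where
  "ep 0 = 1" | "ep (Suc 0) = 1 - monom 1 2" |
  "ep (Suc (Suc m)) = (2 - monom 1 2) * ep (Suc m) - ep m"

lemma pm2[simp]: "poly (monom (1::real) 2) y = y^2" by (simp add: poly_monom)

lemma poly_Qp4: "poly (Qp (Suc (Suc (Suc (Suc m))))) y =
   (1 - 2 * y^2) * poly (Qp (Suc (Suc m))) y - y^4 * poly (Qp m) y"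
proof -
  have a: "poly (Qp (Suc (Suc (Suc (Suc m))))) y = poly (Qp (Suc (Suc (Suc m)))) y - y^2 * poly (Qp (Suc (Suc m))) y"
    by (simp add: poly_monom)
  have b: "poly (Qp (Suc (Suc (Suc m)))) y = poly (Qp (Suc (Suc m))) y - y^2 * poly (Qp (Suc m)) y"
    by (simp add: poly_monom)
  have c: "poly (Qp (Suc (Suc m))) y = poly (Qp (Suc m)) y - y^2 * poly (Qp m) y"
    by (simp add: poly_monom)
  show ?thesis using a b c by (simp add: algebra_simps power2_eq_square power4_eq_xxxx)
qed

lemma eval_E:
  assumes "x \<noteq> (0::real)"
  shows "x^(2*j) * poly (Qp (2*j)) (inverse x) = (-1)^j * poly (ep j) x"
proof (induction j rule: ep.induct)
  case 1 thus ?case by simp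
next
  case 2 thus ?case using assms
    by (simp add: numeral_2_eq_2 poly_monom field_simps power2_eq_square)
next
  case (3 m)
  have e: "2 * Suc (Suc m) = Suc (Suc (Suc (Suc (2*m))))" "2 * Suc m = Suc (Suc (2*m))" by simp_all
  have "x^(2*Suc (Suc m)) * poly (Qp (2*Suc (Suc m))) (inverse x)
      = x^(2*m+4) * ((1 - 2 * (inverse x)^2) * poly (Qp (2 * Suc m)) (inverse x)
          - (inverse x)^4 * poly (Qp (2*m)) (inverse x))"
  proof -
    have q: "poly (Qp (2*Suc(Suc m))) (inverse x) = (1 - 2 * (inverse x)^2) * poly (Qp (2 * Suc m)) (inverse x)
          - (inverse x)^4 * poly (Qp (2*m)) (inverse x)"
      using poly_Qp4[of "2*m" "inverse x"] by (simp only: e)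
    have "(2::nat)*Suc (Suc m) = 2*m+4" by simp
    hence "x^(2*Suc (Suc m)) = x^(2*m+4)" by (simp only:)
    thus ?thesis by (simp only: q)
  qed
  also have "\<dots> = (x^2 - 2) * (x^(2*Suc m) * poly (Qp (2*Suc m)) (inverse x))
          - x^(2*m) * poly (Qp (2*m)) (inverse x)"
  proof -
    define y where "y = inverse x"
    define a where "a = poly (Qp (2 * Suc m)) y"
    define b where "b = poly (Qp (2 * m)) y"
    have xy: "x * y = 1" using assms unfolding y_def by simp
    have p1: "x^4 * y^2 = x^2"
    proof -
      have "x^4 * y^2 = x^2 * (x*y)^2" by (simp add: power_mult_distrib power4_eq_xxxx power2_eq_square)
      thus ?thesis using xy by simp
    qed
    have p2: "x^4 * y^4 = 1"
    proof -
      have "x^4 * y^4 = (x*y)^4" by (simp add: power_mult_distrib)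
      thus ?thesis using xy by simp
    qed
    have "x^(2*m+4) * ((1 - 2 * y^2) * a - y^4 * b) = x^(2*m) * (x^4 * a - 2 * (x^4*y^2) * a - (x^4*y^4) * b)"
      by (simp add: power_add algebra_simps)
    also have "\<dots> = (x^2 - 2) * (x^(2*Suc m) * a) - x^(2*m) * b"
      unfolding p1 p2 by (simp add: power_add algebra_simps power2_eq_square power4_eq_xxxx)
    finally show ?thesis unfolding a_def b_def y_def .
  qed
  also have "\<dots> = (-1)^Suc (Suc m) * poly (ep (Suc (Suc m))) x"
    using 3 by (simp del: Qp.simps add: algebra_simps)
  finally show ?case .
qed

lemma poly_zero_nonzero_pts:
  fixes p :: "real poly"
  assumes "\<And>x. x \<noteq> 0 \<Longrightarrow> poly p x = 0"
  shows "p = 0"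
proof (rule ccontr)
  assume "p \<noteq> 0"
  hence "finite {x. poly p x = 0}" by (rule poly_roots_finite)
  moreover have "UNIV - {0::real} \<subseteq> {x. poly p x = 0}" using assms by auto
  ultimately have "finite (UNIV - {0::real})" using finite_subset by blast
  thus False using infinite_UNIV_char_0[where 'a=real] by simp
qed

lemma reflect_Qp: "reflect_poly (Qp (2*j)) = (-1)^j * ep j"
proof -
  have "poly (reflect_poly (Qp (2*j)) - (-1)^j * ep j) x = 0" if "x \<noteq> 0" for x
    using that eval_E[OF that, of j] poly_reflect_poly_nz[OF that, of "Qp (2*j)"]
    by (simp add: degree_Qp_even)
  hence "reflect_poly (Qp (2*j)) - (-1)^j * ep j = 0" by (rule poly_zero_nonzero_pts)
  thus ?thesis by simp
qed


lemma alt_seqs_0: "alt_seqs 0 k = {[]}"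
  unfolding alt_seqs_def by auto

lemma alt_seqs_Suc_iff:
  "a \<in> alt_seqs (Suc n) k \<longleftrightarrow> (\<exists>c d r. a = c # d # r \<and> 1 \<le> c \<and> c \<le> d \<and> d \<le> k \<and>
       r \<in> alt_seqs n k \<and> (r = [] \<or> hd r \<le> d))"
proof
  assume a: "a \<in> alt_seqs (Suc n) k"
  hence len: "length a = Suc (Suc (2 * n))" and bnd: "\<forall>x\<in>set a. 1 \<le> x \<and> x \<le> k"
    and alt: "\<forall>j. Suc j < 2 * Suc n \<longrightarrow> (if even j then a ! j \<le> a ! Suc j else a ! j \<ge> a ! Suc j)"
    unfolding alt_seqs_def by auto
  obtain c d r where acd: "a = c # d # r" using len
    by (metis length_Suc_conv)
  have lr: "length r = 2 * n" using len acd by simp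
  have cd: "c \<le> d" using alt[rule_format, of 0] acd by simp
  have hd: "r = [] \<or> hd r \<le> d"
  proof (cases r)
    case (Cons x xs)
    hence "n \<noteq> 0" using lr by auto
    hence "d \<ge> r ! 0" using alt[rule_format, of 1] acd by simp
    thus ?thesis using Cons by simp
  qed simp
  have r: "r \<in> alt_seqs n k"
    unfolding alt_seqs_def
  proof (intro CollectI conjI allI impI)
    show "length r = 2 * n" by (rule lr)
    show "\<forall>x\<in>set r. 1 \<le> x \<and> x \<le> k" using bnd acd by auto
    fix j assume jn: "Suc j < 2 * n"
    have h: "if even (Suc (Suc j)) then a ! Suc (Suc j) \<le> a ! Suc (Suc (Suc j)) else a ! Suc (Suc (Suc j)) \<le> a ! Suc (Suc j)"
      using alt jn by simp
    have e1: "a ! Suc (Suc j) = r ! j" "a ! Suc (Suc (Suc j)) = r ! Suc j" using acd by simp_all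
    have e2: "even (Suc (Suc j)) = even j" by simp
    show "if even j then r ! j \<le> r ! Suc j else r ! Suc j \<le> r ! j"
      using h unfolding e1 e2 .
  qed
  show "\<exists>c d r. a = c # d # r \<and> 1 \<le> c \<and> c \<le> d \<and> d \<le> k \<and>
       r \<in> alt_seqs n k \<and> (r = [] \<or> hd r \<le> d)"
    using acd cd hd r bnd by auto
next
  assume "\<exists>c d r. a = c # d # r \<and> 1 \<le> c \<and> c \<le> d \<and> d \<le> k \<and>
       r \<in> alt_seqs n k \<and> (r = [] \<or> hd r \<le> d)"
  then obtain c d r where acd: "a = c # d # r" and c: "1 \<le> c" "c \<le> d" "d \<le> k"
    and r: "r \<in> alt_seqs n k" and hd: "r = [] \<or> hd r \<le> d" by blast
  from r have lr: "length r = 2 * n" and bnd: "\<forall>x\<in>set r. 1 \<le> x \<and> x \<le> k"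
    and alt: "\<forall>j. Suc j < 2 * n \<longrightarrow> (if even j then r ! j \<le> r ! Suc j else r ! j \<ge> r ! Suc j)"
    unfolding alt_seqs_def by auto
  show "a \<in> alt_seqs (Suc n) k"
    unfolding alt_seqs_def
  proof (intro CollectI conjI allI impI)
    show "length a = 2 * Suc n" using acd lr by simp
    show "\<forall>x\<in>set a. 1 \<le> x \<and> x \<le> k" using acd bnd c by auto
    fix j assume j: "Suc j < 2 * Suc n"
    show "if even j then a ! j \<le> a ! Suc j else a ! Suc j \<le> a ! j"
    proof (cases j)
      case 0 thus ?thesis using acd c by simp
    next
      case (Suc j')
      show ?thesis
      proof (cases j')
        case 0
        hence "r \<noteq> []" using j Suc lr by auto
        hence "r ! 0 \<le> d" using hd by (cases r) auto
        thus ?thesis using acd Suc 0 by simp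
      next
        case (Suc j'')
        thus ?thesis using alt[rule_format, of j''] acd \<open>j = Suc j'\<close> j by simp
      qed
    qed
  qed
qed

definition alt' :: "nat \<Rightarrow> nat \<Rightarrow> nat \<Rightarrow> nat list set" where
  "alt' n k b = {a \<in> alt_seqs n k. a = [] \<or> hd a \<le> b}"

lemma alt_seqs_finite: "finite (alt_seqs n k)"
proof -
  have "alt_seqs n k \<subseteq> {a. set a \<subseteq> {0..k} \<and> length a = 2 * n}"
    unfolding alt_seqs_def by auto
  moreover have "finite {a. set a \<subseteq> {0..k} \<and> length a = 2 * n}"
    using finite_lists_length_eq[of "{0..k}" "2 * n"] by simp
  ultimately show ?thesis using finite_subset by blast
qed

lemma alt'_finite: "finite (alt' n k b)"
  unfolding alt'_def using alt_seqs_finite by simp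

lemma alt'_0: "alt' 0 k b = {[]}"
  unfolding alt'_def alt_seqs_0 by auto

lemma alt'_Suc:
  assumes "b \<le> k"
  shows "alt' (Suc n) k b = (\<Union>c\<in>{1..b}. \<Union>d\<in>{c..k}. (\<lambda>r. c # d # r) ` alt' n k d)"
proof (intro equalityI subsetI)
  fix a assume "a \<in> alt' (Suc n) k b"
  then obtain c d r where acd: "a = c # d # r" and c: "1 \<le> c" "c \<le> d" "d \<le> k"
    and r: "r \<in> alt_seqs n k" and hd: "r = [] \<or> hd r \<le> d" and cb: "c \<le> b"
    unfolding alt'_def by (auto simp: alt_seqs_Suc_iff)
  have "r \<in> alt' n k d" unfolding alt'_def using r hd by simp
  hence im: "a \<in> (\<lambda>r. c # d # r) ` alt' n k d" using acd by simp
  show "a \<in> (\<Union>c\<in>{1..b}. \<Union>d\<in>{c..k}. (\<lambda>r. c # d # r) ` alt' n k d)"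
  proof (rule UN_I)
    show "c \<in> {1..b}" using c cb by simp
    show "a \<in> (\<Union>d\<in>{c..k}. (\<lambda>r. c # d # r) ` alt' n k d)"
    proof (rule UN_I)
      show "d \<in> {c..k}" using c by simp
      show "a \<in> (\<lambda>r. c # d # r) ` alt' n k d" by (rule im)
    qed
  qed
next
  fix a assume "a \<in> (\<Union>c\<in>{1..b}. \<Union>d\<in>{c..k}. (\<lambda>r. c # d # r) ` alt' n k d)"
  then obtain c d r where acd: "a = c # d # r" and c: "1 \<le> c" "c \<le> d" "d \<le> k" "c \<le> b"
    and r: "r \<in> alt' n k d" by auto
  thus "a \<in> alt' (Suc n) k b" unfolding alt'_def alt_seqs_Suc_iff by auto
qed

definition gc :: "nat \<Rightarrow> nat \<Rightarrow> nat \<Rightarrow> nat" where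
  "gc n k b = card (alt' n k b)"

lemma gc_0: "gc 0 k b = 1"
  unfolding gc_def alt'_0 by auto

lemma gc_Suc:
  assumes "b \<le> k"
  shows "gc (Suc n) k b = (\<Sum>c\<in>{1..b}. \<Sum>d\<in>{c..k}. gc n k d)"
proof -
  have "gc (Suc n) k b = (\<Sum>c\<in>{1..b}. card (\<Union>d\<in>{c..k}. (\<lambda>r. c # d # r) ` alt' n k d))"
    unfolding gc_def alt'_Suc[OF assms]
    by (rule card_UN_disjoint) (auto simp: alt'_finite)
  also have "\<dots> = (\<Sum>c\<in>{1..b}. \<Sum>d\<in>{c..k}. card ((\<lambda>r. c # d # r) ` alt' n k d))"
    by (intro sum.cong refl card_UN_disjoint) (auto simp: alt'_finite)
  also have "\<dots> = (\<Sum>c\<in>{1..b}. \<Sum>d\<in>{c..k}. gc n k d)"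
    unfolding gc_def by (intro sum.cong refl card_image) (auto simp: inj_on_def)
  finally show ?thesis .
qed

lemma gc_top: "gc n k k = card (alt_seqs n k)"
proof -
  have "alt' n k k = alt_seqs n k"
  proof -
    have "a = [] \<or> hd a \<le> k" if "a \<in> alt_seqs n k" for a
    proof (cases "a = []")
      case False
      hence "hd a \<in> set a" by (rule hd_in_set)
      thus ?thesis using that unfolding alt_seqs_def by auto
    qed simp
    thus ?thesis unfolding alt'_def by auto
  qed
  thus ?thesis unfolding gc_def by simp
qed


definition H :: "nat \<Rightarrow> nat \<Rightarrow> real fps" where
  "H k j = Abs_fps (\<lambda>m. if even m then real (gc (m div 2) k j) else 0)"

lemma gc_Suc_0: "gc (Suc n) k 0 = 0"
  using gc_Suc[of 0 k n] by simp

lemma H_0: "H k 0 = 1"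
proof (rule fps_ext)
  fix m show "H k 0 $ m = 1 $ m"
  proof (cases "m = 0")
    case True thus ?thesis by (simp add: H_def gc_0)
  next
    case False
    show ?thesis
    proof (cases "even m")
      case True
      have "m div 2 \<noteq> 0" using False True by auto
      then obtain n where "m div 2 = Suc n" using not0_implies_Suc by blast
      thus ?thesis using False True by (simp add: H_def gc_Suc_0)
    qed (simp add: H_def False)
  qed
qed

lemma gc_step:
  assumes "j < k"
  shows "gc (Suc n) k (Suc j) = gc (Suc n) k j + (\<Sum>d\<in>{Suc j..k}. gc n k d)"
proof -
  have "gc (Suc n) k (Suc j) = (\<Sum>c\<in>{1..Suc j}. \<Sum>d\<in>{c..k}. gc n k d)"
    using gc_Suc[of "Suc j" k n] assms by simp
  also have "\<dots> = (\<Sum>c\<in>{1..j}. \<Sum>d\<in>{c..k}. gc n k d) + (\<Sum>d\<in>{Suc j..k}. gc n k d)"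
    by (simp add: sum.cl_ivl_Suc)
  also have "(\<Sum>c\<in>{1..j}. \<Sum>d\<in>{c..k}. gc n k d) = gc (Suc n) k j"
    using gc_Suc[of j k n] assms by simp
  finally show ?thesis .
qed

lemma H_step:
  assumes "j < k"
  shows "H k (Suc j) - H k j = fps_X ^ 2 * (\<Sum>d\<in>{Suc j..k}. H k d)"
proof (rule fps_ext)
  fix m
  show "(H k (Suc j) - H k j) $ m = (fps_X ^ 2 * (\<Sum>d\<in>{Suc j..k}. H k d)) $ m"
  proof (cases "m < 2")
    case True
    hence "m = 0 \<or> m = 1" by auto
    thus ?thesis by (auto simp: H_def gc_0 fps_X_power_mult_nth)
  next
    case False
    hence "\<exists>m'. m = Suc (Suc m')" by presburger
    then obtain m' where m: "m = Suc (Suc m')" by blast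
    show ?thesis
    proof (cases "even m'")
      case True
      have d: "m div 2 = Suc (m' div 2)" using m by simp
      show ?thesis using True m
        by (simp add: H_def fps_X_power_mult_nth fps_sum_nth d gc_step[OF assms] of_nat_sum)
    next
      case False
      thus ?thesis using m by (simp add: H_def fps_X_power_mult_nth fps_sum_nth)
    qed
  qed
qed

lemma H_rec:
  assumes "Suc (Suc j) \<le> k"
  shows "H k (Suc (Suc j)) = (2 - fps_X ^ 2) * H k (Suc j) - H k j"
proof -
  have a: "H k (Suc j) - H k j = fps_X ^ 2 * (\<Sum>d\<in>{Suc j..k}. H k d)" using H_step assms by simp
  have b: "H k (Suc (Suc j)) - H k (Suc j) = fps_X ^ 2 * (\<Sum>d\<in>{Suc (Suc j)..k}. H k d)" using H_step assms by simp
  have c: "(\<Sum>d\<in>{Suc j..k}. H k d) = H k (Suc j) + (\<Sum>d\<in>{Suc (Suc j)..k}. H k d)"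
    using assms by (subst sum.atLeast_Suc_atMost) auto
  from a b c show ?thesis by (simp add: algebra_simps)
qed

lemma H_top:
  assumes "1 \<le> k"
  shows "H k (k - 1) = (1 - fps_X ^ 2) * H k k"
proof -
  have "H k (Suc (k-1)) - H k (k-1) = fps_X ^ 2 * (\<Sum>d\<in>{Suc (k-1)..k}. H k d)" using H_step[of "k-1" k] assms by simp
  thus ?thesis using assms by (simp add: algebra_simps)
qed

lemma fps_ep: "fps_of_poly (ep (Suc (Suc m))) = (2 - fps_X ^ 2) * fps_of_poly (ep (Suc m)) - fps_of_poly (ep m)"
proof -
  have "fps_of_poly (ep (Suc (Suc m))) = fps_of_poly ((2 - monom 1 2) * ep (Suc m) - ep m)"
    by (simp only: ep.simps(3))
  also have "\<dots> = (2 - fps_X ^ 2) * fps_of_poly (ep (Suc m)) - fps_of_poly (ep m)"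
    by (simp del: ep.simps add: fps_of_poly_diff fps_of_poly_mult fX2)
  finally show ?thesis .
qed

lemma H_down:
  assumes "Suc m \<le> k"
  shows "H k (k - m) = fps_of_poly (ep m) * H k k \<and> H k (k - Suc m) = fps_of_poly (ep (Suc m)) * H k k"
  using assms
proof (induction m)
  case 0
  thus ?case using H_top[of k] by (simp add: fps_of_poly_diff fX2)
next
  case (Suc m)
  hence IH1: "H k (k - m) = fps_of_poly (ep m) * H k k" and IH2: "H k (k - Suc m) = fps_of_poly (ep (Suc m)) * H k k" by auto
  have e: "Suc (k - Suc m) = k - m" "Suc (k - Suc (Suc m)) = k - Suc m" using Suc.prems by auto
  have r: "H k (k - m) = (2 - fps_X ^ 2) * H k (k - Suc m) - H k (k - Suc (Suc m))"
    using H_rec[of "k - Suc (Suc m)" k] Suc.prems unfolding e(2) unfolding e(1) by simp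
  have "H k (k - Suc (Suc m)) = (2 - fps_X ^ 2) * H k (k - Suc m) - H k (k - m)"
    using r by (simp add: algebra_simps)
  also have "\<dots> = fps_of_poly (ep (Suc (Suc m))) * H k k"
    unfolding IH1 IH2 fps_ep by (simp add: algebra_simps)
  finally show ?case using IH2 by simp
qed

lemma H_closed:
  assumes "1 \<le> k"
  shows "fps_of_poly (ep k) * H k k = 1"
proof -
  have "H k (k - Suc (k-1)) = fps_of_poly (ep (Suc (k-1))) * H k k" using H_down[of "k-1" k] assms by simp
  thus ?thesis using assms H_0 by simp
qed


lemma reflect_monom1: "reflect_poly (monom (1::real) K) = 1"
  by (rule poly_eqI) (auto simp: coeff_reflect_poly degree_monom_eq coeff_monom coeff_1)

lemma C_neg_gf_closed:
  assumes k: "1 \<le> k"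
  shows "C_neg_gf (2*k - 1) 0 (2*k - 1) = - (fps_X * (fps_const ((-1)^k) * H k k))"
proof -
  define K where "K = 2*k - 1"
  have SK: "Suc K = 2 * k" using k unfolding K_def by simp
  have K1: "1 \<le> K" using k unfolding K_def by simp
  define Q where "Q = Qp (2 * k)"
  define F where "F = C_gf K 0 K"
  have FQ: "fps_of_poly Q * F = fps_X ^ K" unfolding Q_def F_def using F_closed[OF K1] SK by simp
  have degQ: "degree Q = 2 * k" unfolding Q_def by (rule degree_Qp_even)
  have Q0: "coeff Q 0 = 1" unfolding Q_def using Qp_props by simp
  have fQ0: "fps_of_poly Q $ 0 \<noteq> 0" using Q0 by simp
  define P where "P = (\<lambda>(p, q). degree p < degree q \<and> coeff q 0 \<noteq> (0::real) \<and>
       fps_of_poly p / fps_of_poly q = C_gf K 0 K)"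
  have wit: "P (monom 1 K, Q)"
  proof -
    have "fps_of_poly (monom (1::real) K) / fps_of_poly Q = fps_X ^ K * inverse (fps_of_poly Q)"
      using fQ0 by (simp add: fps_divide_unit fps_of_poly_monom')
    also have "\<dots> = F * (fps_of_poly Q * inverse (fps_of_poly Q))" using FQ by (simp add: algebra_simps)
    also have "\<dots> = F" using inverse_mult_eq_1'[OF fQ0] by simp
    finally show ?thesis unfolding P_def F_def using degQ Q0 SK by (simp add: degree_monom_eq)
  qed
  obtain p q where pq: "C_pq K 0 K = (p, q)" by fastforce
  have "P (C_pq K 0 K)" unfolding C_pq_def P_def[symmetric] using wit by (rule someI)
  hence dpq: "degree p < degree q" and q0: "coeff q 0 \<noteq> 0" and pqF: "fps_of_poly p / fps_of_poly q = F"
    unfolding P_def pq F_def by auto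
  have fq0: "fps_of_poly q $ 0 \<noteq> 0" using q0 by simp
  have pF: "fps_of_poly p = F * fps_of_poly q"
  proof -
    have "F * fps_of_poly q = fps_of_poly p * (inverse (fps_of_poly q) * fps_of_poly q)"
      using pqF fq0 by (simp add: fps_divide_unit algebra_simps)
    thus ?thesis using inverse_mult_eq_1[OF fq0] by simp
  qed
  have "fps_of_poly (p * Q) = fps_of_poly (monom 1 K * q)"
    using pF FQ by (simp add: fps_of_poly_mult fps_of_poly_monom' algebra_simps)
  hence pQ: "p * Q = monom 1 K * q" by (simp add: fps_of_poly_eq_iff)
  have qnz: "q \<noteq> 0" using q0 by auto
  have Qnz: "Q \<noteq> 0" using Q0 by auto
  have pnz: "p \<noteq> 0"
  proof
    assume "p = 0"
    hence "monom (1::real) K * q = 0" using pQ by simp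
    thus False using qnz by (simp add: monom_eq_0_iff)
  qed
  have "degree p + degree Q = K + degree q"
    using arg_cong[OF pQ, of degree] pnz Qnz qnz
    by (simp add: degree_mult_eq degree_monom_eq)
  hence ddeg: "degree q - degree p = 1" using degQ SK by simp
  have rr: "reflect_poly p * reflect_poly Q = reflect_poly q"
    using arg_cong[OF pQ, of reflect_poly] by (simp add: reflect_poly_mult reflect_monom1)
  have rQ: "reflect_poly Q = (-1)^k * ep k" unfolding Q_def by (rule reflect_Qp)
  define A where "A = fps_of_poly (reflect_poly p)"
  define B where "B = fps_of_poly (reflect_poly Q)"
  have A0: "A $ 0 \<noteq> 0" unfolding A_def using pnz by simp
  have B0: "B $ 0 \<noteq> 0" unfolding B_def using Qnz by simp
  have Bdef: "B = fps_const ((-1)^k) * fps_of_poly (ep k)"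
    unfolding B_def rQ by (simp add: fps_of_poly_mult fps_of_poly_power fps_of_poly_uminus
        flip: fps_const_power fps_const_neg)
  have invB: "inverse B = fps_const ((-1)^k) * H k k"
  proof (rule fps_inverse_unique)
    have "B * (fps_const ((-1)^k) * H k k) = fps_const ((-1)^k * (-1)^k) * (fps_of_poly (ep k) * H k k)"
      unfolding Bdef by (simp add: algebra_simps flip: fps_const_mult)
    also have "\<dots> = 1" using H_closed[OF k] by (simp flip: power_mult_distrib)
    finally show "B * (fps_const ((-1)^k) * H k k) = 1" .
  qed
  have "C_neg_gf K 0 K = - (fps_X ^ 1 * A / (A * B))"
  proof -
    have r2: "fps_of_poly (reflect_poly q) = A * B" unfolding A_def B_def rr[symmetric] fps_of_poly_mult ..
    show ?thesis unfolding C_neg_gf_def pq prod.case ddeg r2 A_def ..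
  qed
  also have "fps_X ^ 1 * A / (A * B) = fps_X * (A * inverse A) * inverse B"
    using A0 B0 inverse_mult_eq_1'[OF A0] by (cases "A = 0") (auto simp: fps_divide_unit fps_inverse_mult algebra_simps)
  also have "\<dots> = fps_X * inverse B" using inverse_mult_eq_1'[OF A0] by simp
  finally show ?thesis unfolding invB K_def .
qed

theorem corollary14:
  fixes n k :: nat
  assumes "k \<ge> 1"
  shows "(-1) ^ (k + 1) * D (2 * k - 1) (- 2 * int n - 2 * int k) = real (card (alt_seqs n k))"
proof -
  have i: "- 2 * int n - 2 * int k + int (2 * k - 1) = - int (2 * n + 1)" using assms by simp
  have "D (2 * k - 1) (- 2 * int n - 2 * int k) = C_neg_gf (2*k - 1) 0 (2*k - 1) $ (2 * n + 1)"
  proof -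
    have "nat (- (- int (2 * n + 1))) = 2 * n + 1" by simp
    thus ?thesis unfolding D_def C_int_def i by simp
  qed
  also have "\<dots> = - ((-1)^k * real (gc n k k))"
    unfolding C_neg_gf_closed[OF assms] by (simp add: fps_X_mult_nth' H_def)
  finally show ?thesis using gc_top[of n k] by simp
qed

end
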